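(* For every LCNF formula $\Phi$ and any two labelled clauses $C_1^{L_1}, C_2^{L_2} \in \Phi$ to which self-subsuming resolution applies, $\mathsf{MCS}(\mathsf{ssr}(\Phi, C_1^{L_1}, C_2^{L_2})) = \mathsf{MCS}(\Phi)$.
   Context: Fix a countable set $Lbls$ of labels. A labelled clause $C^L$ is a pair of a clause $C$ (a finite set of literals) and a finite set $L \subseteq Lbls$. An LCNF formula $\Phi$ is a finite set of labelled clauses; $Cls(\Phi) = \{C : C^L \in \Phi\}$ and $Lbls(\Phi) = \bigcup_{C^L\in\Phi} L$. $\Phi$ is satisfiable iff $Cls(\Phi)$ is. For $M \subseteq Lbls(\Phi)$, the induced subformula is $\Phi|_M = \{C^L \in \Phi : L \subseteq M\}$. A set $R \subseteq Lbls(\Phi)$ is an MCS of $\Phi$ if (i) $\Phi|_{Lbls(\Phi)\setminus R}$ is satisfiable and (ii) for every $l \in R$, $\Phi|_{(Lbls(\Phi)\setminus R)\cup\{l\}}$ is unsatisfiable; $\mathsf{MCS}(\Phi)$ is the set of all MCSes of $\Phi$. Self-subsuming resolution: if $C_1^{L_1} = (l \vee A)^{L_1}$ and $C_2^{L_2} = (\neg l \vee B)^{L_2}$ are in $\Phi$ with $A \subset B$ and $L_1 \subseteq L_2$, then $\mathsf{ssr}(\Phi, C_1^{L_1}, C_2^{L_2}) = (\Phi \setminus \{C_2^{L_2}\}) \cup \{B^{L_2}\}$. *)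

theory Defs
  imports Main "HOL-Library.Countable"
begin

datatype 'v lit = Pos 'v | Neg 'v

fun neg :: "'v lit \<Rightarrow> 'v lit" where
  "neg (Pos x) = Neg x"
| "neg (Neg x) = Pos x"

type_synonym 'v clause = "'v lit set"
type_synonym ('v, 'l) lclause = "'v clause \<times> 'l set"
type_synonym ('v, 'l) lcnf = "('v, 'l) lclause set"

fun lit_sat :: "('v \<Rightarrow> bool) \<Rightarrow> 'v lit \<Rightarrow> bool" where
  "lit_sat \<sigma> (Pos x) = \<sigma> x"
| "lit_sat \<sigma> (Neg x) = (\<not> \<sigma> x)"

definition clauses_sat :: "'v clause set \<Rightarrow> bool" where
  "clauses_sat S \<longleftrightarrow> (\<exists>\<sigma>. \<forall>C\<in>S. \<exists>lt\<in>C. lit_sat \<sigma> lt)"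

definition is_lcnf :: "('v, 'l::countable) lcnf \<Rightarrow> bool" where
  "is_lcnf \<Phi> \<longleftrightarrow> finite \<Phi> \<and> (\<forall>(C, L)\<in>\<Phi>. finite C \<and> finite L)"

definition Cls :: "('v, 'l) lcnf \<Rightarrow> 'v clause set" where
  "Cls \<Phi> = fst ` \<Phi>"

definition Lbls :: "('v, 'l) lcnf \<Rightarrow> 'l set" where
  "Lbls \<Phi> = (\<Union>(C, L)\<in>\<Phi>. L)"

definition lsat :: "('v, 'l) lcnf \<Rightarrow> bool" where
  "lsat \<Phi> \<longleftrightarrow> clauses_sat (Cls \<Phi>)"

definition induced :: "('v, 'l) lcnf \<Rightarrow> 'l set \<Rightarrow> ('v, 'l) lcnf" where
  "induced \<Phi> M = {(C, L) \<in> \<Phi>. L \<subseteq> M}"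

definition is_MCS :: "('v, 'l) lcnf \<Rightarrow> 'l set \<Rightarrow> bool" where
  "is_MCS \<Phi> R \<longleftrightarrow> R \<subseteq> Lbls \<Phi>
     \<and> lsat (induced \<Phi> (Lbls \<Phi> - R))
     \<and> (\<forall>l\<in>R. \<not> lsat (induced \<Phi> ((Lbls \<Phi> - R) \<union> {l})))"

definition MCS :: "('v, 'l) lcnf \<Rightarrow> 'l set set" where
  "MCS \<Phi> = {R. is_MCS \<Phi> R}"

definition ssr_applies :: "('v, 'l) lcnf \<Rightarrow> ('v, 'l) lclause \<Rightarrow> ('v, 'l) lclause
    \<Rightarrow> 'v lit \<Rightarrow> 'v clause \<Rightarrow> 'v clause \<Rightarrow> bool" where
  "ssr_applies \<Phi> c1 c2 l A B \<longleftrightarrow> c1 \<in> \<Phi> \<and> c2 \<in> \<Phi>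
     \<and> fst c1 = insert l A \<and> fst c2 = insert (neg l) B
     \<and> A \<subset> B \<and> snd c1 \<subseteq> snd c2"

definition ssr :: "('v, 'l) lcnf \<Rightarrow> ('v, 'l) lclause \<Rightarrow> ('v, 'l) lclause
    \<Rightarrow> 'v clause \<Rightarrow> ('v, 'l) lcnf" where
  "ssr \<Phi> c1 c2 B = (\<Phi> - {c2}) \<union> {(B, snd c2)}"

end

theory Submission
  imports Defs
begin

lemma lit_sat_neg: "lit_sat \<sigma> (neg x) = (\<not> lit_sat \<sigma> x)"
  by (cases x) auto

lemma sat_iff:
  fixes \<sigma> :: "'v \<Rightarrow> bool" and \<Phi> :: "('v, 'l) lcnf"
  assumes ap: "ssr_applies \<Phi> (C1, L1) (C2, L2) l A B"
  shows "(\<forall>C\<in>Cls (induced (ssr \<Phi> (C1, L1) (C2, L2) B) M). \<exists>lt\<in>C. lit_sat \<sigma> lt)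
       = (\<forall>C\<in>Cls (induced \<Phi> M). \<exists>lt\<in>C. lit_sat \<sigma> lt)"
proof -
  from ap have c1: "(C1, L1) \<in> \<Phi>" and c2: "(C2, L2) \<in> \<Phi>" and e1: "C1 = insert l A"
    and e2: "C2 = insert (neg l) B" and AB: "A \<subset> B" and LL: "L1 \<subseteq> L2"
    by (auto simp: ssr_applies_def)
  define S where "S \<tau> C = (\<exists>lt\<in>C. lit_sat \<tau> lt)" for \<tau> :: "'v \<Rightarrow> bool" and C
  have BC: "S \<sigma> B \<Longrightarrow> S \<sigma> C2" using e2 by (auto simp: S_def)
  have CB: "S \<sigma> C1 \<Longrightarrow> S \<sigma> C2 \<Longrightarrow> S \<sigma> B" using e1 e2 AB
    by (auto simp: S_def lit_sat_neg)
  show ?thesis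
  proof (cases "L2 \<subseteq> M")
    case False
    then have "induced (ssr \<Phi> (C1, L1) (C2, L2) B) M = induced \<Phi> M"
      unfolding induced_def ssr_def by auto
    then show ?thesis by simp
  next
    case True
    then have in1: "C1 \<in> Cls (induced \<Phi> M)" and in2: "C2 \<in> Cls (induced \<Phi> M)"
      using c1 c2 LL unfolding Cls_def induced_def
      by (force intro: rev_image_eqI)+
    have inB: "B \<in> Cls (induced (ssr \<Phi> (C1, L1) (C2, L2) B) M)"
      using True unfolding Cls_def induced_def ssr_def
      by (intro rev_image_eqI[of "(B, L2)"]) auto
    have sub1: "Cls (induced (ssr \<Phi> (C1, L1) (C2, L2) B) M) \<subseteq> insert B (Cls (induced \<Phi> M))"
      unfolding Cls_def induced_def ssr_def by (auto simp: image_iff)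
    have sub2: "Cls (induced \<Phi> M) \<subseteq> insert C2 (Cls (induced (ssr \<Phi> (C1, L1) (C2, L2) B) M))"
      unfolding Cls_def induced_def ssr_def by (auto simp: image_iff)
    show ?thesis
    proof
      assume h: "\<forall>C\<in>Cls (induced (ssr \<Phi> (C1, L1) (C2, L2) B) M). \<exists>lt\<in>C. lit_sat \<sigma> lt"
      then have "S \<sigma> C2" using BC inB by (auto simp: S_def)
      then show "\<forall>C\<in>Cls (induced \<Phi> M). \<exists>lt\<in>C. lit_sat \<sigma> lt"
        using h sub2 by (auto simp: S_def)
    next
      assume h: "\<forall>C\<in>Cls (induced \<Phi> M). \<exists>lt\<in>C. lit_sat \<sigma> lt"
      then have "S \<sigma> B" using CB in1 in2 by (auto simp: S_def)
      then show "\<forall>C\<in>Cls (induced (ssr \<Phi> (C1, L1) (C2, L2) B) M). \<exists>lt\<in>C. lit_sat \<sigma> lt"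
        using h sub1 by (auto simp: S_def)
    qed
  qed
qed

lemma lsat_iff:
  assumes ap: "ssr_applies \<Phi> (C1, L1) (C2, L2) l A B"
  shows "lsat (induced (ssr \<Phi> (C1, L1) (C2, L2) B) M) = lsat (induced \<Phi> M)"
  unfolding lsat_def clauses_sat_def using sat_iff[OF ap] by simp

lemma lbls_eq:
  assumes ap: "ssr_applies \<Phi> (C1, L1) (C2, L2) l A B"
  shows "Lbls (ssr \<Phi> (C1, L1) (C2, L2) B) = Lbls \<Phi>"
  using ap unfolding ssr_applies_def Lbls_def ssr_def by force

theorem proposition4:
  fixes \<Phi> :: "('v, 'l::countable) lcnf"
  assumes "is_lcnf \<Phi>"
    and "ssr_applies \<Phi> (C1, L1) (C2, L2) l A B"
  shows "MCS (ssr \<Phi> (C1, L1) (C2, L2) B) = MCS \<Phi>"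
  unfolding MCS_def is_MCS_def lsat_iff[OF assms(2)] lbls_eq[OF assms(2)] ..

end
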